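(* Let $(\alpha_j)_{j\geq 1}$ be a sequence of pairwise distinct complex numbers and let $(P_k)_{k\geq 0}$ be the polynomials defined in the context. Let $(a_k)_{k\geq0}$ and $(b_k)_{k\geq 0}$ be complex sequences such that both series $\sum_{k=0}^\infty a_k P_k(z)$ and $\sum_{k=0}^\infty b_k P_k(z)$ converge uniformly on compact subsets of $\mathbb{C}$. If $\sum_{k=0}^{\infty} a_k P_k(z) = \sum_{k=0}^{\infty} b_k P_k(z)$ for all $z \in \mathbb{C}$, then $a_k = b_k$ for every $k \geq 0$.
   Context: Every integer $n \geq 1$ can be written uniquely as $n = (1+2+\cdots+m_n) + j_n$ with integers $m_n \geq 0$ and $1 \leq j_n \leq m_n+1$. Define polynomials by $P_0(z) = 1$ and recursively $P_n(z) = (z - \alpha_{j_n}) P_{n-1}(z)$ for $n \geq 1$ (so $\deg P_n = n$; e.g. $P_1=(z-\alpha_1)$, $P_2=(z-\alpha_1)^2$, $P_3=(z-\alpha_1)^2(z-\alpha_2)$, $P_4=(z-\alpha_1)^3(z-\alpha_2)$). *)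

theory Defs
  imports "HOL-Analysis.Analysis" "HOL-Computational_Algebra.Polynomial"
begin

definition tri :: "nat \<Rightarrow> nat" where
  "tri m = m * (m + 1) div 2"

text \<open>For n \<ge> 1: the unique m_n \<ge> 0 with tri m_n < n \<le> tri (m_n + 1),
  and j_n = n - tri m_n, so that 1 \<le> j_n \<le> m_n + 1.\<close>
definition m_idx :: "nat \<Rightarrow> nat" where
  "m_idx n = (LEAST m. n \<le> tri (m + 1))"

definition j_idx :: "nat \<Rightarrow> nat" where
  "j_idx n = n - tri (m_idx n)"

fun Pnodes :: "(nat \<Rightarrow> complex) \<Rightarrow> nat \<Rightarrow> complex poly" where
  "Pnodes \<alpha> 0 = 1"
| "Pnodes \<alpha> (Suc n) = [:- \<alpha> (j_idx (Suc n)), 1:] * Pnodes \<alpha> n"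

end

theory Submission
  imports Defs
begin


lemma root_sum:
  assumes "0 < i" "i < M"
  shows "(\<Sum>j<M. cis (2*pi/M) ^ (i*j)) = 0"
proof -
  define x where "x = cis (2*pi*real i/real M)"
  have M: "M > 0" using assms by simp
  have bij: "bij_betw (\<lambda>k. cis (2 * pi * real k / real M)) {..<M} {z. z ^ M = 1}"
    by (rule Complex.bij_betw_roots_unity[OF M])
  have "x \<noteq> 1"
  proof
    assume "x = 1"
    hence "cis (2 * pi * real i / real M) = cis (2 * pi * real 0 / real M)" by (simp add: x_def)
    with bij_betw_imp_inj_on[OF bij] assms have "i = 0"
      by (metis inj_on_def lessThan_iff M)
    with assms show False by simp
  qed
  have xM: "x ^ M = 1" using bij_betw_imp_surj_on[OF bij] assms unfolding x_def by auto
  have "cis (2*pi/M) ^ (i*j) = x ^ j" for j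
  proof -
    have "cis (2*pi/M) ^ i = x" unfolding x_def Complex.DeMoivre by (simp add: field_simps)
    thus ?thesis by (simp add: power_mult)
  qed
  hence "(\<Sum>j<M. cis (2*pi/M) ^ (i*j)) = (\<Sum>j<M. x ^ j)" by simp
  also have "\<dots> = 0" using \<open>x \<noteq> 1\<close> xM by (simp add: sum_gp_strict)
  finally show ?thesis .
qed

lemma mean_value_poly:
  fixes p :: "complex poly"
  assumes "degree p < M"
  shows "(\<Sum>j<M. poly p (w + r * cis (2*pi/M) ^ j)) = of_nat M * poly p w"
proof -
  define q where "q = pcompose p [:w, 1:]"
  define u where "u = cis (2*pi/M)"
  have dq: "degree q = degree p" by (simp add: q_def degree_pcompose)
  have pq: "poly p (w + z) = poly q z" for z by (simp add: q_def poly_pcompose)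
  have "(\<Sum>j<M. poly p (w + r * u ^ j)) = (\<Sum>j<M. \<Sum>i\<le>degree q. coeff q i * (r * u ^ j) ^ i)"
    unfolding pq poly_altdef[of q] by simp
  also have "\<dots> = (\<Sum>i\<le>degree q. coeff q i * r ^ i * (\<Sum>j<M. u ^ (i*j)))"
  proof -
    have e: "coeff q i * (r * u ^ j) ^ i = coeff q i * r ^ i * u ^ (i*j)" for i j
      by (simp add: power_mult_distrib power_mult[symmetric] mult.commute)
    show ?thesis unfolding e by (subst sum.swap) (simp add: sum_distrib_left)
  qed
  also have "\<dots> = (\<Sum>i\<in>{0}. coeff q i * r ^ i * (\<Sum>j<M. u ^ (i*j)))"
  proof (rule sum.mono_neutral_right)
    show "\<forall>i\<in>{..degree q} - {0}. coeff q i * r ^ i * (\<Sum>j<M. u ^ (i*j)) = 0"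
      using root_sum assms dq unfolding u_def by auto
  qed auto
  also have "\<dots> = of_nat M * poly p w"
    using pq[of 0] by (simp add: poly_0_coeff_0)
  finally show ?thesis by (simp add: u_def)
qed

fun Rn :: "(nat \<Rightarrow> complex) \<Rightarrow> nat \<Rightarrow> nat \<Rightarrow> complex poly" where
  "Rn \<alpha> n 0 = 1"
| "Rn \<alpha> n (Suc k) = (if Suc k \<le> n then 1 else [:- \<alpha> (j_idx (Suc k)), 1:] * Rn \<alpha> n k)"

lemma Rn_le: "k \<le> n \<Longrightarrow> Rn \<alpha> n k = 1"
  by (induction k) auto

lemma P_split: "n \<le> k \<Longrightarrow> Pnodes \<alpha> k = Pnodes \<alpha> n * Rn \<alpha> n k"
proof (induction k)
  case 0 thus ?case by simp
next
  case (Suc k)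
  show ?case
  proof (cases "Suc k \<le> n")
    case True thus ?thesis using Suc by (simp add: Rn_le)
  next
    case False thus ?thesis using Suc by (simp add: mult.left_commute)
  qed
qed

lemma deg_Rn: "degree (Rn \<alpha> n k) \<le> k"
proof (induction k)
  case (Suc k)
  have "degree ([:- \<alpha> (j_idx (Suc k)), 1:] * Rn \<alpha> n k) \<le> Suc k"
    using degree_mult_le[of "[:- \<alpha> (j_idx (Suc k)), 1:]" "Rn \<alpha> n k"] Suc by simp
  thus ?case by simp
qed simp

lemma Rn_root: "n < k \<Longrightarrow> poly (Rn \<alpha> n k) (\<alpha> (j_idx (Suc n))) = 0"
proof (induction k)
  case (Suc k)
  thus ?case by (cases "n < k") (auto simp: less_Suc_eq)
qed simp

lemma P_lower: "(\<forall>i\<in>{1..n}. 1 \<le> cmod (z - \<alpha> (j_idx i))) \<Longrightarrow> 1 \<le> cmod (poly (Pnodes \<alpha> n) z)"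
proof (induction n)
  case (Suc n)
  have a: "1 \<le> cmod (z - \<alpha> (j_idx (Suc n)))" using Suc.prems by auto
  have b: "1 \<le> cmod (poly (Pnodes \<alpha> n) z)" using Suc by auto
  have "1 \<le> cmod (z - \<alpha> (j_idx (Suc n))) * cmod (poly (Pnodes \<alpha> n) z)"
    using a b by (metis mult_mono' mult_1 norm_ge_zero order_trans zero_le_one)
  moreover have "poly (Pnodes \<alpha> (Suc n)) z = (z - \<alpha> (j_idx (Suc n))) * poly (Pnodes \<alpha> n) z" by (simp add: algebra_simps)
  ultimately show ?case by (simp only: norm_mult)
qed simp

lemma unif_diff:
  assumes ua: "uniformly_convergent_on K (\<lambda>N z. \<Sum>k<N. a k * f k z)"
    and ub: "uniformly_convergent_on K (\<lambda>N z. \<Sum>k<N. b k * f k z)"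
    and eq: "\<And>z. (\<Sum>k. a k * f k z) = (\<Sum>k. b k * f k z)"
    and e: "(e::real) > 0"
  shows "\<exists>N0. \<forall>N\<ge>N0. \<forall>z\<in>K. cmod (\<Sum>k<N. (a k - b k) * f k z) < e"
proof -
  obtain la where la: "uniform_limit K (\<lambda>N z. \<Sum>k<N. a k * f k z) la sequentially"
    using ua unfolding uniformly_convergent_on_def by blast
  obtain lb where lb: "uniform_limit K (\<lambda>N z. \<Sum>k<N. b k * f k z) lb sequentially"
    using ub unfolding uniformly_convergent_on_def by blast
  have "la z = lb z" if "z \<in> K" for z
  proof -
    have "(\<lambda>N. \<Sum>k<N. a k * f k z) \<longlonglongrightarrow> la z"
      using tendsto_uniform_limitI[OF la that] .
    hence "la z = (\<Sum>k. a k * f k z)" by (simp add: sums_def sums_unique)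
    moreover have "(\<lambda>N. \<Sum>k<N. b k * f k z) \<longlonglongrightarrow> lb z"
      using tendsto_uniform_limitI[OF lb that] .
    hence "lb z = (\<Sum>k. b k * f k z)" by (simp add: sums_def sums_unique)
    ultimately show ?thesis using eq by simp
  qed
  moreover obtain N1 where N1: "\<forall>N\<ge>N1. \<forall>z\<in>K. dist (\<Sum>k<N. a k * f k z) (la z) < e/2"
    using la e unfolding uniform_limit_sequentially_iff by (meson half_gt_zero)
  moreover obtain N2 where N2: "\<forall>N\<ge>N2. \<forall>z\<in>K. dist (\<Sum>k<N. b k * f k z) (lb z) < e/2"
    using lb e unfolding uniform_limit_sequentially_iff by (meson half_gt_zero)
  ultimately have "\<forall>N\<ge>max N1 N2. \<forall>z\<in>K. cmod (\<Sum>k<N. (a k - b k) * f k z) < e"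
  proof (intro allI impI ballI)
    fix N z assume N: "max N1 N2 \<le> N" and z: "z \<in> K"
    have "(\<Sum>k<N. (a k - b k) * f k z) = (\<Sum>k<N. a k * f k z) - la z - ((\<Sum>k<N. b k * f k z) - lb z)"
      using \<open>\<And>z. z \<in> K \<Longrightarrow> la z = lb z\<close>[OF z] by (simp add: algebra_simps sum_subtractf)
    also have "cmod \<dots> \<le> cmod ((\<Sum>k<N. a k * f k z) - la z) + cmod ((\<Sum>k<N. b k * f k z) - lb z)"
      by (rule norm_triangle_ineq4)
    also have "\<dots> < e/2 + e/2"
      using N1 N2 N z by (intro add_strict_mono) (auto simp: dist_norm)
    finally show "cmod (\<Sum>k<N. (a k - b k) * f k z) < e" by simp
  qed
  thus ?thesis by blast
qed


theorem lemma3: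
  fixes \<alpha> :: "nat \<Rightarrow> complex" and a b :: "nat \<Rightarrow> complex"
  assumes distinct: "inj_on \<alpha> {1..}"
    and unif_a: "\<And>K. compact K \<Longrightarrow>
       uniformly_convergent_on K (\<lambda>N z. \<Sum>k<N. a k * poly (Pnodes \<alpha> k) z)"
    and unif_b: "\<And>K. compact K \<Longrightarrow>
       uniformly_convergent_on K (\<lambda>N z. \<Sum>k<N. b k * poly (Pnodes \<alpha> k) z)"
    and eq: "\<And>z. (\<Sum>k. a k * poly (Pnodes \<alpha> k) z) = (\<Sum>k. b k * poly (Pnodes \<alpha> k) z)"
  shows "\<forall>k. a k = b k"
proof -
  define c where "c k = a k - b k" for k
  have main: "c n = 0" for n
  proof (induction n rule: less_induct)
    case (less n)
    define w where "w = \<alpha> (j_idx (Suc n))"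
    define r where "r = 1 + (\<Sum>i\<in>{1..n}. cmod (\<alpha> (j_idx i) - w))"
    define K where "K = sphere w r"
    have Kc: "compact K" by (simp add: K_def)
    have rpos: "r > 0" unfolding r_def by (smt (verit) sum_nonneg norm_ge_zero)
    have lowP: "1 \<le> cmod (poly (Pnodes \<alpha> n) z)" if "z \<in> K" for z
    proof (rule P_lower, intro ballI)
      fix i assume i: "i \<in> {1..n}"
      have "cmod (\<alpha> (j_idx i) - w) \<le> (\<Sum>i\<in>{1..n}. cmod (\<alpha> (j_idx i) - w))"
        by (rule member_le_sum) (use i in auto)
      moreover have "cmod (z - w) = r" using that by (simp add: K_def dist_norm norm_minus_commute)
      moreover have "cmod (z - w) \<le> cmod (z - \<alpha> (j_idx i)) + cmod (\<alpha> (j_idx i) - w)"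
        using norm_triangle_ineq[of "z - \<alpha> (j_idx i)" "\<alpha> (j_idx i) - w"] by simp
      ultimately show "1 \<le> cmod (z - \<alpha> (j_idx i))" unfolding r_def by linarith
    qed
    show "c n = 0"
    proof (rule ccontr)
      assume cn: "c n \<noteq> 0"
      define e where "e = cmod (c n)"
      have e: "e > 0" using cn by (simp add: e_def)
      obtain N0 where N0: "\<forall>N\<ge>N0. \<forall>z\<in>K. cmod (\<Sum>k<N. c k * poly (Pnodes \<alpha> k) z) < e"
        using unif_diff[OF unif_a[OF Kc] unif_b[OF Kc] eq e] unfolding c_def by blast
      define N where "N = max N0 (Suc n)"
      define G where "G = (\<Sum>k\<in>{n..<N}. smult (c k) (Rn \<alpha> n k))"
      have SG: "(\<Sum>k<N. c k * poly (Pnodes \<alpha> k) z) = poly (Pnodes \<alpha> n) z * poly G z" for z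
      proof -
        have "(\<Sum>k<N. c k * poly (Pnodes \<alpha> k) z) = (\<Sum>k\<in>{n..<N}. c k * poly (Pnodes \<alpha> k) z)"
          by (rule sum.mono_neutral_right) (auto simp: less.IH)
        also have "\<dots> = (\<Sum>k\<in>{n..<N}. poly (Pnodes \<alpha> n) z * (c k * poly (Rn \<alpha> n k) z))"
          proof (rule sum.cong)
          fix k assume "k \<in> {n..<N}"
          hence "Pnodes \<alpha> k = Pnodes \<alpha> n * Rn \<alpha> n k" by (intro P_split) simp
          thus "c k * poly (Pnodes \<alpha> k) z = poly (Pnodes \<alpha> n) z * (c k * poly (Rn \<alpha> n k) z)"
            by (simp add: algebra_simps)
        qed simp
        also have "\<dots> = poly (Pnodes \<alpha> n) z * poly G z"
          by (simp add: G_def poly_sum sum_distrib_left)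
        finally show ?thesis .
      qed
      have Gw: "poly G w = c n"
      proof -
        have "poly G w = (\<Sum>k\<in>{n..<N}. c k * poly (Rn \<alpha> n k) w)" by (simp add: G_def poly_sum)
        also have "\<dots> = (\<Sum>k\<in>{n}. c k * poly (Rn \<alpha> n k) w)"
          by (rule sum.mono_neutral_right) (auto simp: N_def w_def Rn_root)
        also have "\<dots> = c n" by (simp add: Rn_le)
        finally show ?thesis .
      qed
      define M where "M = Suc N"
      have degG: "degree G < M"
      proof -
        have "degree G \<le> N" unfolding G_def
        proof (rule degree_sum_le)
          fix k assume "k \<in> {n..<N}"
          thus "degree (smult (c k) (Rn \<alpha> n k)) \<le> N"
            using deg_Rn[of \<alpha> n k] degree_smult_le[of "c k" "Rn \<alpha> n k"] by simp
        qed simp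
        thus ?thesis by (simp add: M_def)
      qed
      define u where "u = cis (2*pi/M)"
      have mv: "(\<Sum>j<M. poly G (w + of_real r * u^j)) = of_nat M * c n"
        using mean_value_poly[OF degG, of w "of_real r"] Gw unfolding u_def by simp
      have zK: "w + of_real r * u^j \<in> K" for j
        using rpos by (simp add: K_def dist_norm u_def norm_mult norm_power)
      have bound: "cmod (poly G (w + of_real r * u^j)) < e" for j
      proof -
        let ?z = "w + of_real r * u^j"
        have "cmod (poly (Pnodes \<alpha> n) ?z * poly G ?z) < e"
          using N0 zK[of j] SG[of ?z] unfolding N_def by (metis max.cobounded1)
        moreover have "cmod (poly G ?z) \<le> cmod (poly (Pnodes \<alpha> n) ?z) * cmod (poly G ?z)"
          using lowP[OF zK[of j]] by (simp add: mult_le_cancel_right1)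
        ultimately show ?thesis by (simp add: norm_mult)
      qed
      have "real M * e = cmod (\<Sum>j<M. poly G (w + of_real r * u^j))"
        using mv by (simp add: e_def norm_mult)
      also have "\<dots> \<le> (\<Sum>j<M. cmod (poly G (w + of_real r * u^j)))" by (rule norm_sum)
      also have "\<dots> < (\<Sum>j<M. e)" by (rule sum_strict_mono) (auto simp: M_def bound)
      also have "\<dots> = real M * e" by simp
      finally show False by simp
    qed
  qed
  thus ?thesis by (simp add: c_def)
qed

end
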